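(* Let $\mathfrak{g}$ be a complex simple Lie algebra with Weyl group $W$, and let $\lambda_1,\lambda_2,\lambda_3,\lambda_4$ be dominant integral weights such that $\lambda_1+\lambda_2=\lambda=\lambda_3+\lambda_4$ and, for every positive root $\alpha$, $|(\lambda_1-\lambda_2)(\alpha^\vee)|\le|(\lambda_3-\lambda_4)(\alpha^\vee)|$. Suppose in addition that $P_{\lambda_1,\lambda_2}\subseteq C_f$ and $P_{\lambda_3,\lambda_4}\subseteq C_f$. Then $P_{\lambda_3,\lambda_4}\subseteq P_{\lambda_1,\lambda_2}$.
   Context: For dominant weights $\mu,\nu$, $P_{\mu,\nu}=\operatorname{Conv}\{\mu+w\nu : w\in W\}\subset P\otimes\mathbb{R}$, where $P$ is the weight lattice and $\operatorname{Conv}$ denotes convex hull. $C_f=\{x\in P\otimes\mathbb{R} : x(\alpha_i^\vee)\ge 0 \text{ for all simple coroots } \alpha_i^\vee\}$ is the (closed) fundamental Weyl chamber. $\alpha^\vee$ denotes the coroot of the root $\alpha$. *)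

theory Defs
  imports "HOL-Analysis.Analysis"
begin

text \<open>Root systems realised in a real Euclidean space 'a (playing the role of P \<otimes> R).
  The pairing x(alpha-coroot) of a vector with the coroot of \<alpha> is 2 (x\<bullet>\<alpha>)/(\<alpha>\<bullet>\<alpha>).\<close>

definition copair :: "'a::real_inner \<Rightarrow> 'a \<Rightarrow> real" where
  "copair x \<alpha> = 2 * (x \<bullet> \<alpha>) / (\<alpha> \<bullet> \<alpha>)"

definition refl :: "'a::real_inner \<Rightarrow> 'a \<Rightarrow> 'a" where
  "refl \<alpha> x = x - copair x \<alpha> *\<^sub>R \<alpha>"

definition root_system :: "'a::euclidean_space set \<Rightarrow> bool" where
  "root_system R \<longleftrightarrow> finite R \<and> 0 \<notin> R \<and> span R = UNIV
     \<and> (\<forall>\<alpha>\<in>R. refl \<alpha> ` R = R)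
     \<and> (\<forall>\<alpha>\<in>R. \<forall>\<beta>\<in>R. copair \<beta> \<alpha> \<in> \<int>)
     \<and> (\<forall>\<alpha>\<in>R. \<forall>c::real. c *\<^sub>R \<alpha> \<in> R \<longrightarrow> c = 1 \<or> c = -1)"

definition irreducible_rs :: "'a::euclidean_space set \<Rightarrow> bool" where
  "irreducible_rs R \<longleftrightarrow> \<not> (\<exists>A B. A \<noteq> {} \<and> B \<noteq> {} \<and> A \<union> B = R \<and> A \<inter> B = {}
        \<and> (\<forall>a\<in>A. \<forall>b\<in>B. a \<bullet> b = 0))"

definition is_base :: "'a::euclidean_space set \<Rightarrow> 'a set \<Rightarrow> bool" where
  "is_base R \<Delta> \<longleftrightarrow> \<Delta> \<subseteq> R \<and> independent \<Delta>
     \<and> (\<forall>\<beta>\<in>R. \<exists>k::'a \<Rightarrow> int. ((\<forall>\<alpha>\<in>\<Delta>. k \<alpha> \<ge> 0) \<or> (\<forall>\<alpha>\<in>\<Delta>. k \<alpha> \<le> 0))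
                 \<and> \<beta> = (\<Sum>\<alpha>\<in>\<Delta>. of_int (k \<alpha>) *\<^sub>R \<alpha>))"

definition positive_roots :: "'a::euclidean_space set \<Rightarrow> 'a set \<Rightarrow> 'a set" where
  "positive_roots R \<Delta> = {\<beta>\<in>R. \<exists>k::'a \<Rightarrow> int. (\<forall>\<alpha>\<in>\<Delta>. k \<alpha> \<ge> 0)
                 \<and> \<beta> = (\<Sum>\<alpha>\<in>\<Delta>. of_int (k \<alpha>) *\<^sub>R \<alpha>)}"

inductive_set weyl_group :: "'a::euclidean_space set \<Rightarrow> ('a \<Rightarrow> 'a) set" for R where
  id: "id \<in> weyl_group R"
| step: "\<alpha> \<in> R \<Longrightarrow> w \<in> weyl_group R \<Longrightarrow> refl \<alpha> \<circ> w \<in> weyl_group R"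

definition integral_weight :: "'a::euclidean_space set \<Rightarrow> 'a \<Rightarrow> bool" where
  "integral_weight R lam \<longleftrightarrow> (\<forall>\<alpha>\<in>R. copair lam \<alpha> \<in> \<int>)"

definition fundamental_chamber :: "'a::euclidean_space set \<Rightarrow> 'a set" where
  "fundamental_chamber \<Delta> = {x. \<forall>\<alpha>\<in>\<Delta>. copair x \<alpha> \<ge> 0}"

definition dominant_integral :: "'a::euclidean_space set \<Rightarrow> 'a set \<Rightarrow> 'a \<Rightarrow> bool" where
  "dominant_integral R \<Delta> lam \<longleftrightarrow> integral_weight R lam \<and> lam \<in> fundamental_chamber \<Delta>"

definition Ppoly :: "'a::euclidean_space set \<Rightarrow> 'a \<Rightarrow> 'a \<Rightarrow> 'a set" where
  "Ppoly R \<mu> \<nu> = convex hull {\<mu> + w \<nu> | w. w \<in> weyl_group R}"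

end

theory Submission
  imports Defs
begin


lemma copair_self: "a \<noteq> 0 \<Longrightarrow> copair a a = 2"
  by (simp add: copair_def)

lemma refl_self: "a \<noteq> 0 \<Longrightarrow> refl a a = - a"
  by (simp add: refl_def copair_self algebra_simps scaleR_2)

lemma copair_add: "copair (x + y) a = copair x a + copair y a"
  by (simp add: copair_def inner_add_left add_divide_distrib algebra_simps)

lemma copair_diff: "copair (x - y) a = copair x a - copair y a"
  by (simp add: copair_def inner_diff_left diff_divide_distrib algebra_simps)

lemma copair_scale: "copair (c *\<^sub>R x) a = c * copair x a"
  by (simp add: copair_def)

lemma copair_neg2: "copair x (- a) = - copair x a"
  by (simp add: copair_def)

lemma refl_neg: "refl (- a) = refl a"
  by (rule ext) (simp add: refl_def copair_neg2)

lemma linear_refl: "linear (refl a)"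
  by (rule linearI) (simp_all add: refl_def copair_add copair_scale algebra_simps)

lemma copair_refl: "a \<noteq> 0 \<Longrightarrow> copair (refl a x) a = - copair x a"
  by (simp add: refl_def copair_diff copair_scale copair_self)

lemma refl_refl: "a \<noteq> 0 \<Longrightarrow> refl a (refl a x) = x"
  by (simp add: refl_def copair_diff copair_scale copair_self algebra_simps)

lemma refl_inner: "a \<noteq> 0 \<Longrightarrow> refl a x \<bullet> refl a y = x \<bullet> y"
proof -
  assume a: "a \<noteq> 0"
  then have aa: "a \<bullet> a \<noteq> 0" by simp
  show ?thesis
    using aa by (simp add: refl_def copair_def inner_diff_left inner_diff_right
        inner_commute field_simps)
qed

lemma refl_inner_swap: "a \<noteq> 0 \<Longrightarrow> refl a x \<bullet> y = x \<bullet> refl a y"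
  by (metis refl_inner refl_refl)

lemma inner_refl_self: "a \<noteq> 0 \<Longrightarrow> refl a x \<bullet> a = - (x \<bullet> a)"
  by (metis inner_minus_right refl_inner_swap refl_self)

lemma conj_refl:
  assumes "linear U" "\<And>x y. U x \<bullet> U y = x \<bullet> y"
  shows "U (refl a x) = refl (U a) (U x)"
proof -
  have "copair (U x) (U a) = copair x a" by (simp add: copair_def assms(2))
  then show ?thesis
    using assms(1) by (simp add: refl_def linear_diff linear_scale)
qed

primrec wword :: "'a::real_inner list \<Rightarrow> 'a \<Rightarrow> 'a" where
  "wword [] = id"
| "wword (a # as) = refl a \<circ> wword as"

lemma wf_append: "wword (xs @ ys) = wword xs \<circ> wword ys"
  by (induct xs) auto

lemma wf_linear: "linear (wword xs)"
  proof (induct xs)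
  case Nil then show ?case using linear_id by (simp add: id_def)
next
  case (Cons a xs) then show ?case using linear_compose[OF Cons linear_refl, of a] by (simp add: o_def)
qed

lemma wf_inner: "0 \<notin> set xs \<Longrightarrow> wword xs x \<bullet> wword xs y = x \<bullet> y"
  by (induct xs arbitrary: x y) (auto simp: refl_inner)

lemma wf_rev_inv: "0 \<notin> set xs \<Longrightarrow> wword (rev xs) (wword xs x) = x"
  by (induct xs arbitrary: x) (auto simp: wf_append refl_refl)

lemma wf_inv_rev: "0 \<notin> set xs \<Longrightarrow> wword xs (wword (rev xs) x) = x"
  using wf_rev_inv[of "rev xs"] by simp

lemma wf_inner_swap: "0 \<notin> set xs \<Longrightarrow> wword (rev xs) x \<bullet> y = x \<bullet> wword xs y"
  by (metis wf_inner wf_inv_rev set_rev)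

lemma wf_conj:
  assumes "0 \<notin> set xs"
  shows "wword xs \<circ> refl a = refl (wword xs a) \<circ> wword xs"
  using conj_refl[OF wf_linear wf_inner[OF assms]] by (auto simp: fun_eq_iff)



locale rsys =
  fixes R D :: "'a::euclidean_space set"
  assumes rs: "root_system R" and base: "is_base R D"
begin

lemma finR: "finite R" using rs unfolding root_system_def by simp
lemma zR: "0 \<notin> R" using rs unfolding root_system_def by simp
lemma reflR: "\<alpha> \<in> R \<Longrightarrow> refl \<alpha> ` R = R" using rs unfolding root_system_def by simp
lemma reduced: "\<alpha> \<in> R \<Longrightarrow> c *\<^sub>R \<alpha> \<in> R \<Longrightarrow> c = 1 \<or> c = -1"
  using rs unfolding root_system_def by simp
lemma DR: "D \<subseteq> R" using base unfolding is_base_def by simp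
lemma indep: "independent D" using base unfolding is_base_def by simp
lemma baseex: "\<beta> \<in> R \<Longrightarrow> \<exists>k::'a \<Rightarrow> int. ((\<forall>\<alpha>\<in>D. k \<alpha> \<ge> 0) \<or> (\<forall>\<alpha>\<in>D. k \<alpha> \<le> 0))
                 \<and> \<beta> = (\<Sum>\<alpha>\<in>D. of_int (k \<alpha>) *\<^sub>R \<alpha>)"
  using base unfolding is_base_def by simp

lemma finD: "finite D" using DR finR finite_subset by blast
lemma D0: "0 \<notin> D" using DR zR by blast

lemma refl_in_R: "\<alpha> \<in> R \<Longrightarrow> \<beta> \<in> R \<Longrightarrow> refl \<alpha> \<beta> \<in> R"
  using reflR by blast

lemma negR: "\<alpha> \<in> R \<Longrightarrow> - \<alpha> \<in> R"
proof -
  assume a: "\<alpha> \<in> R"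
  then have "\<alpha> \<noteq> 0" using zR by blast
  then have "refl \<alpha> \<alpha> = - \<alpha>" by (rule refl_self)
  then show ?thesis using refl_in_R[OF a a] by simp
qed

lemma wfR: "set xs \<subseteq> R \<Longrightarrow> \<beta> \<in> R \<Longrightarrow> wword xs \<beta> \<in> R"
proof (induct xs)
  case Nil then show ?case by simp
next
  case (Cons a xs) then show ?case using refl_in_R[of a "wword xs \<beta>"] by simp
qed

lemma spanD: "\<beta> \<in> R \<Longrightarrow> \<beta> \<in> span D"
proof -
  assume "\<beta> \<in> R"
  then obtain k :: "'a \<Rightarrow> int" where "\<beta> = (\<Sum>\<alpha>\<in>D. of_int (k \<alpha>) *\<^sub>R \<alpha>)"
    using baseex by blast
  then show ?thesis by (simp add: span_sum span_scale span_base)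
qed

definition rep :: "'a \<Rightarrow> 'a \<Rightarrow> real" where "rep x = representation D x"

lemma rep_sum: "\<gamma> \<in> D \<Longrightarrow> rep (\<Sum>\<alpha>\<in>D. k \<alpha> *\<^sub>R \<alpha>) \<gamma> = k \<gamma>"
proof -
  assume g: "\<gamma> \<in> D"
  have r: "representation D (\<Sum>\<alpha>\<in>D. k \<alpha> *\<^sub>R \<alpha>) = (\<lambda>b. \<Sum>\<alpha>\<in>D. representation D (k \<alpha> *\<^sub>R \<alpha>) b)"
    by (rule representation_sum[OF indep]) (simp add: span_scale span_base)
  have t: "\<alpha> \<in> D \<Longrightarrow> representation D (k \<alpha> *\<^sub>R \<alpha>) \<gamma> = k \<alpha> * (if \<gamma> = \<alpha> then 1 else 0)" for \<alpha>
    using representation_scale[OF indep span_base, of \<alpha> "k \<alpha>"] representation_basis[OF indep, of \<alpha>]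
    by simp
  have "rep (\<Sum>\<alpha>\<in>D. k \<alpha> *\<^sub>R \<alpha>) \<gamma> = (\<Sum>\<alpha>\<in>D. k \<alpha> * (if \<gamma> = \<alpha> then 1 else 0))"
    unfolding rep_def r using t by (intro sum.cong) auto
  also have "\<dots> = (\<Sum>\<alpha>\<in>D. if \<gamma> = \<alpha> then k \<alpha> else 0)"
    by (rule sum.cong) auto
  also have "\<dots> = k \<gamma>" using g finD by (simp add: sum.delta)
  finally show ?thesis .
qed

lemma sum_rep: "x \<in> span D \<Longrightarrow> (\<Sum>\<gamma>\<in>D. rep x \<gamma> *\<^sub>R \<gamma>) = x"
  unfolding rep_def by (rule sum_representation_eq[OF indep _ finD order_refl])

lemma rep_diff: "x \<in> span D \<Longrightarrow> y \<in> span D \<Longrightarrow> rep (x - y) \<gamma> = rep x \<gamma> - rep y \<gamma>"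
  unfolding rep_def using representation_diff[OF indep, of y x] by simp

lemma rep_scale: "x \<in> span D \<Longrightarrow> rep (c *\<^sub>R x) \<gamma> = c * rep x \<gamma>"
  unfolding rep_def using representation_scale[OF indep, of x c] by simp

lemma rep_neg: "x \<in> span D \<Longrightarrow> rep (- x) \<gamma> = - rep x \<gamma>"
  unfolding rep_def using representation_neg[OF indep, of x] by simp

lemma rep_basis: "\<alpha> \<in> D \<Longrightarrow> rep \<alpha> \<gamma> = (if \<gamma> = \<alpha> then 1 else 0)"
  unfolding rep_def using representation_basis[OF indep, of \<alpha>] by simp

lemma sign: "\<beta> \<in> R \<Longrightarrow> (\<forall>\<gamma>\<in>D. rep \<beta> \<gamma> \<ge> 0) \<or> (\<forall>\<gamma>\<in>D. rep \<beta> \<gamma> \<le> 0)"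
proof -
  assume "\<beta> \<in> R"
  then obtain k :: "'a \<Rightarrow> int" where k: "(\<forall>\<alpha>\<in>D. k \<alpha> \<ge> 0) \<or> (\<forall>\<alpha>\<in>D. k \<alpha> \<le> 0)"
    "\<beta> = (\<Sum>\<alpha>\<in>D. of_int (k \<alpha>) *\<^sub>R \<alpha>)"
    using baseex by blast
  have "\<gamma> \<in> D \<Longrightarrow> rep \<beta> \<gamma> = of_int (k \<gamma>)" for \<gamma>
    using rep_sum[of \<gamma> "\<lambda>\<alpha>. of_int (k \<alpha>)"] unfolding k(2)[symmetric] by simp
  then show ?thesis using k(1) by auto
qed

definition Rp where "Rp = {\<beta>\<in>R. \<forall>\<gamma>\<in>D. rep \<beta> \<gamma> \<ge> 0}"

lemma posneg: "\<beta> \<in> R \<Longrightarrow> \<beta> \<in> Rp \<or> - \<beta> \<in> Rp"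
  using sign[of \<beta>] negR[of \<beta>] spanD[of \<beta>] by (auto simp: Rp_def rep_neg)

lemma notboth: "\<beta> \<in> Rp \<Longrightarrow> - \<beta> \<notin> Rp"
proof
  assume a: "\<beta> \<in> Rp" "- \<beta> \<in> Rp"
  then have s: "\<beta> \<in> span D" "\<beta> \<in> R" using spanD Rp_def by auto
  have "\<forall>\<gamma>\<in>D. rep \<beta> \<gamma> = 0" using a s by (auto simp: Rp_def rep_neg intro: antisym)
  then have "\<beta> = 0" using sum_rep[OF s(1)] by simp
  then show False using s zR by simp
qed

lemma D_Rp: "D \<subseteq> Rp"
  using DR by (auto simp: Rp_def rep_basis)

lemma rep_refl: "\<alpha> \<in> D \<Longrightarrow> \<beta> \<in> span D \<Longrightarrow>
   rep (refl \<alpha> \<beta>) \<gamma> = rep \<beta> \<gamma> - copair \<beta> \<alpha> * (if \<gamma> = \<alpha> then 1 else 0)"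
  unfolding refl_def
  by (simp add: rep_diff rep_scale span_scale span_base rep_basis)

lemma key: "\<alpha> \<in> D \<Longrightarrow> \<beta> \<in> Rp \<Longrightarrow> \<beta> \<noteq> \<alpha> \<Longrightarrow> refl \<alpha> \<beta> \<in> Rp"
proof -
  assume a: "\<alpha> \<in> D" "\<beta> \<in> Rp" "\<beta> \<noteq> \<alpha>"
  have bR: "\<beta> \<in> R" and bs: "\<beta> \<in> span D" using a spanD by (auto simp: Rp_def)
  have aR: "\<alpha> \<in> R" using a DR by auto
  have rR: "refl \<alpha> \<beta> \<in> R" using refl_in_R aR bR by blast
  show ?thesis
  proof (cases "\<exists>\<gamma>\<in>D. \<gamma> \<noteq> \<alpha> \<and> rep \<beta> \<gamma> > 0")
    case True
    then obtain \<gamma> where g: "\<gamma> \<in> D" "\<gamma> \<noteq> \<alpha>" "rep \<beta> \<gamma> > 0" by blast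
    have "rep (refl \<alpha> \<beta>) \<gamma> > 0" using g rep_refl[OF a(1) bs] by simp
    then show ?thesis using sign[OF rR] g rR by (auto simp: Rp_def)
  next
    case False
    then have z: "\<forall>\<gamma>\<in>D. \<gamma> \<noteq> \<alpha> \<longrightarrow> rep \<beta> \<gamma> = 0" using a(2) by (force simp: Rp_def)
    have "\<beta> = (\<Sum>\<gamma>\<in>D. rep \<beta> \<gamma> *\<^sub>R \<gamma>)" using sum_rep[OF bs] by simp
    also have "\<dots> = (\<Sum>\<gamma>\<in>D. (if \<gamma> = \<alpha> then rep \<beta> \<alpha> *\<^sub>R \<alpha> else 0))"
      by (rule sum.cong) (auto simp: z)
    also have "\<dots> = rep \<beta> \<alpha> *\<^sub>R \<alpha>" using a(1) finD by (simp add: sum.delta)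
    finally have e: "\<beta> = rep \<beta> \<alpha> *\<^sub>R \<alpha>" .
    then have "rep \<beta> \<alpha> = 1 \<or> rep \<beta> \<alpha> = -1" using reduced[OF aR] bR by metis
    moreover have "rep \<beta> \<alpha> \<ge> 0" using a by (auto simp: Rp_def)
    ultimately have "\<beta> = \<alpha>" using e by auto
    then show ?thesis using a by simp
  qed
qed

definition domin :: "'a \<Rightarrow> bool" where "domin g \<longleftrightarrow> (\<forall>\<alpha>\<in>D. g \<bullet> \<alpha> \<ge> 0)"

lemma dom_pos: "domin g \<Longrightarrow> \<beta> \<in> Rp \<Longrightarrow> g \<bullet> \<beta> \<ge> 0"
proof -
  assume a: "domin g" "\<beta> \<in> Rp"
  then have bs: "\<beta> \<in> span D" using spanD by (auto simp: Rp_def)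
  have "g \<bullet> \<beta> = (\<Sum>\<gamma>\<in>D. rep \<beta> \<gamma> * (g \<bullet> \<gamma>))"
    by (subst sum_rep[OF bs, symmetric]) (simp add: inner_sum_right)
  also have "\<dots> \<ge> 0" using a by (auto simp: Rp_def domin_def intro!: sum_nonneg)
  finally show ?thesis .
qed

end

context rsys begin

lemma Rp_R: "Rp \<subseteq> R" by (auto simp: Rp_def)
lemma D_ne: "\<alpha> \<in> D \<Longrightarrow> \<alpha> \<noteq> 0" using D0 by blast
lemma setD0: "set xs \<subseteq> D \<Longrightarrow> 0 \<notin> set xs" using D0 by blast

definition negset :: "'a \<Rightarrow> 'a set" where "negset x = {\<beta>\<in>Rp. x \<bullet> \<beta> < 0}"

lemma fin_negset: "finite (negset x)"
  by (rule finite_subset[OF _ finR]) (auto simp: negset_def Rp_def)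

lemma spanRU: "span R = UNIV" using rs unfolding root_system_def by simp

lemma descent_step:
  assumes a: "\<alpha> \<in> D" and xa: "x \<bullet> \<alpha> < 0"
  shows "card (negset (refl \<alpha> x)) < card (negset x)"
proof -
  have a0: "\<alpha> \<noteq> 0" using D_ne a by blast
  have aRp: "\<alpha> \<in> Rp" using D_Rp a by blast
  have sub: "negset (refl \<alpha> x) \<subseteq> refl \<alpha> ` (negset x - {\<alpha>})"
  proof
    fix \<beta> assume b: "\<beta> \<in> negset (refl \<alpha> x)"
    then have bRp: "\<beta> \<in> Rp" and bn: "refl \<alpha> x \<bullet> \<beta> < 0" by (auto simp: negset_def)
    have "refl \<alpha> x \<bullet> \<alpha> = - (x \<bullet> \<alpha>)" by (rule inner_refl_self[OF a0])
    then have "\<beta> \<noteq> \<alpha>" using bn xa by auto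
    then have r: "refl \<alpha> \<beta> \<in> Rp" using key[OF a bRp] by blast
    have "x \<bullet> refl \<alpha> \<beta> < 0" using bn refl_inner_swap[OF a0, of x \<beta>] by simp
    moreover have "refl \<alpha> \<beta> \<noteq> \<alpha>"
    proof
      assume "refl \<alpha> \<beta> = \<alpha>"
      then have "\<beta> = refl \<alpha> \<alpha>" using refl_refl[OF a0, of \<beta>] by simp
      then have "\<beta> = - \<alpha>" using refl_self[OF a0] by simp
      then show False using notboth[OF aRp] bRp by simp
    qed
    ultimately have "refl \<alpha> \<beta> \<in> negset x - {\<alpha>}" using r by (auto simp: negset_def)
    moreover have "\<beta> = refl \<alpha> (refl \<alpha> \<beta>)" using refl_refl[OF a0] by simp
    ultimately show "\<beta> \<in> refl \<alpha> ` (negset x - {\<alpha>})" by blast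
  qed
  have "card (negset (refl \<alpha> x)) \<le> card (refl \<alpha> ` (negset x - {\<alpha>}))"
    by (rule card_mono[OF _ sub]) (simp add: fin_negset)
  also have "\<dots> \<le> card (negset x - {\<alpha>})" by (rule card_image_le) (simp add: fin_negset)
  also have "\<dots> < card (negset x)"
    by (rule card_Diff1_less[OF fin_negset]) (simp add: negset_def aRp xa)
  finally show ?thesis .
qed

lemma F1: "\<exists>xs. set xs \<subseteq> D \<and> domin (wword xs x)"
proof (induct "card (negset x)" arbitrary: x rule: less_induct)
  case less
  show ?case
  proof (cases "domin x")
    case True
    then show ?thesis by (intro exI[of _ "[]"]) simp
  next
    case False
    then obtain \<alpha> where a: "\<alpha> \<in> D" "x \<bullet> \<alpha> < 0" unfolding domin_def by force
    from less[OF descent_step[OF a]] obtain xs where "set xs \<subseteq> D" "domin (wword xs (refl \<alpha> x))"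
      by blast
    then show ?thesis using a by (intro exI[of _ "xs @ [\<alpha>]"]) (simp add: wf_append)
  qed
qed

lemma deletion:
  assumes "set us \<subseteq> D" "\<alpha> \<in> D" "- (wword us \<alpha>) \<in> Rp"
  shows "\<exists>vs. set vs \<subseteq> D \<and> length vs < length us \<and> wword us \<circ> refl \<alpha> = wword vs"
  using assms
proof (induct us)
  case Nil
  then show ?case using notboth D_Rp by auto
next
  case (Cons a us)
  have aD: "a \<in> D" and usD: "set us \<subseteq> D" using Cons.prems by auto
  have bR: "wword us \<alpha> \<in> R" using wfR DR usD Cons.prems(2) by blast
  show ?case
  proof (cases "- (wword us \<alpha>) \<in> Rp")
    case True
    from Cons.hyps[OF usD Cons.prems(2) True] obtain vs where
      "set vs \<subseteq> D" "length vs < length us" "wword us \<circ> refl \<alpha> = wword vs" by blast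
    moreover have "wword (a # us) \<circ> refl \<alpha> = wword (a # vs)"
      using \<open>wword us \<circ> refl \<alpha> = wword vs\<close> by (metis comp_assoc wword.simps(2))
    moreover have "set (a # vs) \<subseteq> D" "length (a # vs) < length (a # us)"
      using aD \<open>set vs \<subseteq> D\<close> \<open>length vs < length us\<close> by auto
    ultimately show ?thesis by blast
  next
    case False
    then have bp: "wword us \<alpha> \<in> Rp" using posneg bR by blast
    have eq: "wword us \<alpha> = a"
    proof (rule ccontr)
      assume "wword us \<alpha> \<noteq> a"
      then have "refl a (wword us \<alpha>) \<in> Rp" using key[OF aD bp] by blast
      moreover have "- refl a (wword us \<alpha>) \<in> Rp" using Cons.prems(3) by simp
      ultimately show False using notboth by blast
    qed
    have "wword (a # us) \<circ> refl \<alpha> = refl a \<circ> (wword us \<circ> refl \<alpha>)" by (simp add: o_assoc)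
    also have "\<dots> = refl a \<circ> (refl a \<circ> wword us)" using wf_conj[OF setD0[OF usD], of \<alpha>] eq by simp
    also have "\<dots> = wword us" using refl_refl[OF D_ne[OF aD]] by (auto simp: fun_eq_iff)
    finally have "wword (a # us) \<circ> refl \<alpha> = wword us" .
    moreover have "length us < length (a # us)" by simp
    ultimately show ?thesis using usD by blast
  qed
qed

lemma F2:
  assumes "set us \<subseteq> D" "domin g" "domin y"
  shows "g \<bullet> wword us y \<le> g \<bullet> y"
  using assms
proof (induct "length us" arbitrary: us rule: less_induct)
  case less
  show ?case
  proof (cases us rule: rev_cases)
    case Nil
    then show ?thesis by simp
  next
    case (snoc vs a)
    have aD: "a \<in> D" and vsD: "set vs \<subseteq> D" using less.prems snoc by auto
    have bR: "wword vs a \<in> R" using wfR DR vsD aD by blast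
    have wus: "wword us = wword vs \<circ> refl a" using snoc by (simp add: wf_append)
    show ?thesis
    proof (cases "- (wword vs a) \<in> Rp")
      case True
      from deletion[OF vsD aD True] obtain ws where
        ws: "set ws \<subseteq> D" "length ws < length vs" "wword vs \<circ> refl a = wword ws" by blast
      have "length ws < length us" using ws snoc by simp
      from less.hyps[OF this ws(1) less.prems(2,3)] show ?thesis using wus ws(3) by simp
    next
      case False
      then have bp: "wword vs a \<in> Rp" using posneg bR by blast
      have a0: "a \<noteq> 0" using D_ne aD by blast
      have c: "copair y a \<ge> 0" using less.prems(3) aD a0
        by (auto simp: domin_def copair_def intro!: divide_nonneg_pos)
      have "wword us y = wword vs y - copair y a *\<^sub>R wword vs a"
        using wus wf_linear[of vs] by (simp add: refl_def linear_diff linear_scale)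
      then have "g \<bullet> wword us y = g \<bullet> wword vs y - copair y a * (g \<bullet> wword vs a)"
        by (simp add: inner_diff_right)
      also have "\<dots> \<le> g \<bullet> wword vs y" using c dom_pos[OF less.prems(2) bp] by simp
      also have "\<dots> \<le> g \<bullet> y" using less.hyps[of vs] snoc vsD less.prems(2,3) by simp
      finally show ?thesis .
    qed
  qed
qed

definition ht :: "'a \<Rightarrow> real" where "ht x = (\<Sum>\<gamma>\<in>D. rep x \<gamma>)"

lemma pos_conj: "\<beta> \<in> Rp \<Longrightarrow> \<exists>us \<alpha>. set us \<subseteq> D \<and> \<alpha> \<in> D \<and> \<beta> = wword us \<alpha>"
proof (induct "card {\<gamma>\<in>Rp. ht \<gamma> < ht \<beta>}" arbitrary: \<beta> rule: less_induct)
  case less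
  show ?case
  proof (cases "\<beta> \<in> D")
    case True
    then show ?thesis by (intro exI[of _ "[]"] exI[of _ \<beta>]) simp
  next
    case False
    have bR: "\<beta> \<in> R" and bs: "\<beta> \<in> span D" using less.prems Rp_R spanD by auto
    have "\<exists>\<alpha>\<in>D. \<beta> \<bullet> \<alpha> > 0"
    proof (rule ccontr)
      assume "\<not> ?thesis"
      then have n: "\<forall>\<alpha>\<in>D. \<beta> \<bullet> \<alpha> \<le> 0" by auto
      have "\<beta> \<bullet> \<beta> = (\<Sum>\<gamma>\<in>D. rep \<beta> \<gamma> * (\<beta> \<bullet> \<gamma>))"
        by (subst (2) sum_rep[OF bs, symmetric]) (simp add: inner_sum_right)
      also have "\<dots> \<le> 0" using n less.prems
        by (auto simp: Rp_def intro!: sum_nonpos mult_nonneg_nonpos)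
      finally have "\<beta> \<bullet> \<beta> = 0" using inner_ge_zero[of \<beta>] by linarith
      then have "\<beta> = 0" by simp
      then show False using bR zR by simp
    qed
    then obtain \<alpha> where a: "\<alpha> \<in> D" "\<beta> \<bullet> \<alpha> > 0" by blast
    have a0: "\<alpha> \<noteq> 0" using D_ne a by blast
    have ba: "\<beta> \<noteq> \<alpha>" using False a by blast
    define \<beta>' where "\<beta>' = refl \<alpha> \<beta>"
    have b'p: "\<beta>' \<in> Rp" unfolding \<beta>'_def using key[OF a(1) less.prems ba] .
    have c: "copair \<beta> \<alpha> > 0" using a a0 by (simp add: copair_def)
    have "ht \<beta>' = (\<Sum>\<gamma>\<in>D. rep \<beta> \<gamma> - copair \<beta> \<alpha> * (if \<gamma> = \<alpha> then 1 else 0))"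
      unfolding ht_def \<beta>'_def using rep_refl[OF a(1) bs] by simp
    also have "\<dots> = ht \<beta> - (\<Sum>\<gamma>\<in>D. if \<gamma> = \<alpha> then copair \<beta> \<alpha> else 0)"
      unfolding ht_def sum_subtractf by (simp add: if_distrib cong: if_cong)
    also have "\<dots> = ht \<beta> - copair \<beta> \<alpha>" using a(1) finD by (simp add: sum.delta)
    finally have hlt: "ht \<beta>' < ht \<beta>" using c by simp
    have "{\<gamma>\<in>Rp. ht \<gamma> < ht \<beta>'} \<subset> {\<gamma>\<in>Rp. ht \<gamma> < ht \<beta>}"
      using hlt b'p by auto
    then have "card {\<gamma>\<in>Rp. ht \<gamma> < ht \<beta>'} < card {\<gamma>\<in>Rp. ht \<gamma> < ht \<beta>}"
      by (rule psubset_card_mono[rotated]) (rule finite_subset[OF _ finR], auto simp: Rp_def)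
    from less.hyps[OF this b'p] obtain us \<alpha>' where
      u: "set us \<subseteq> D" "\<alpha>' \<in> D" "\<beta>' = wword us \<alpha>'" by blast
    have "\<beta> = refl \<alpha> \<beta>'" unfolding \<beta>'_def using refl_refl[OF a0] by simp
    then have "\<beta> = wword (\<alpha> # us) \<alpha>'" using u by simp
    then show ?thesis using u a by (intro exI[of _ "\<alpha> # us"] exI[of _ \<alpha>']) auto
  qed
qed

lemma refl_gen: "\<beta> \<in> R \<Longrightarrow> \<exists>xs. set xs \<subseteq> D \<and> refl \<beta> = wword xs"
proof -
  assume bR: "\<beta> \<in> R"
  obtain \<beta>0 where b0: "\<beta>0 \<in> Rp" "refl \<beta> = refl \<beta>0"
    using posneg[OF bR] refl_neg[of \<beta>] by (metis minus_minus)
  from pos_conj[OF b0(1)] obtain us \<alpha> where u: "set us \<subseteq> D" "\<alpha> \<in> D" "\<beta>0 = wword us \<alpha>" by blast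
  have z: "0 \<notin> set us" using setD0[OF u(1)] .
  have "wword (us @ \<alpha> # rev us) = wword us \<circ> refl \<alpha> \<circ> wword (rev us)" by (simp add: wf_append o_assoc)
  also have "\<dots> = refl \<beta>0 \<circ> wword us \<circ> wword (rev us)" using wf_conj[OF z, of \<alpha>] u(3) by simp
  also have "\<dots> = refl \<beta>0" using wf_inv_rev[OF z] by (simp add: fun_eq_iff)
  finally show ?thesis using u b0 by (intro exI[of _ "us @ \<alpha> # rev us"]) auto
qed

lemma weyl_gen: "w \<in> weyl_group R \<Longrightarrow> \<exists>xs. set xs \<subseteq> D \<and> w = wword xs"
proof (induct rule: weyl_group.induct)
  case id
  then show ?case by (intro exI[of _ "[]"]) simp
next
  case (step \<alpha> w)
  then obtain xs ys where "set xs \<subseteq> D" "w = wword xs" "set ys \<subseteq> D" "refl \<alpha> = wword ys"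
    using refl_gen by blast
  then show ?case by (intro exI[of _ "ys @ xs"]) (simp add: wf_append)
qed

lemma wf_weyl: "set xs \<subseteq> D \<Longrightarrow> wword xs \<in> weyl_group R"
proof (induct xs)
  case Nil
  show ?case using weyl_group.id[of R] by (simp only: wword.simps)
next
  case (Cons a xs)
  then have "refl a \<circ> wword xs \<in> weyl_group R" using weyl_group.step[of a R "wword xs"] DR by auto
  then show ?case by (simp only: wword.simps)
qed

lemma W_fin: "finite (weyl_group R)"
proof -
  have inj: "inj_on (\<lambda>w. restrict w R) (weyl_group R)"
  proof (rule inj_onI)
    fix w1 w2 assume w: "w1 \<in> weyl_group R" "w2 \<in> weyl_group R" "restrict w1 R = restrict w2 R"
    obtain xs1 xs2 where x: "w1 = wword xs1" "w2 = wword xs2" using weyl_gen w by metis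
    have e: "\<And>x. x \<in> R \<Longrightarrow> w1 x = w2 x" using w(3) by (metis restrict_apply')
    show "w1 = w2"
    proof
      fix x
      show "w1 x = w2 x"
        using linear_eq_on_span[of w1 w2 R x] wf_linear x e spanRU by auto
    qed
  qed
  have sub: "(\<lambda>w. restrict w R) ` weyl_group R \<subseteq> PiE R (\<lambda>_. R)"
  proof
    fix f assume "f \<in> (\<lambda>w. restrict w R) ` weyl_group R"
    then obtain w where w: "w \<in> weyl_group R" "f = restrict w R" by blast
    obtain xs where "set xs \<subseteq> D" "w = wword xs" using weyl_gen w by metis
    then have "\<And>x. x \<in> R \<Longrightarrow> w x \<in> R" using wfR DR by blast
    then show "f \<in> PiE R (\<lambda>_. R)" using w by auto
  qed
  have "finite (PiE R (\<lambda>_. R))" using finR by (simp add: finite_PiE)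
  then have "finite ((\<lambda>w. restrict w R) ` weyl_group R)" using sub finite_subset by blast
  then show ?thesis using inj finite_imageD by blast
qed

end


lemma simple_pos:
  assumes "\<alpha> \<in> \<Delta>" "\<alpha> \<in> R" "finite \<Delta>"
  shows "\<alpha> \<in> positive_roots R \<Delta>"
proof -
  have "(\<Sum>\<gamma>\<in>\<Delta>. of_int (if \<gamma> = \<alpha> then 1 else 0) *\<^sub>R \<gamma>) = (\<Sum>\<gamma>\<in>\<Delta>. if \<gamma> = \<alpha> then \<gamma> else 0)"
    by (rule sum.cong) auto
  also have "\<dots> = \<alpha>" using assms by (simp add: sum.delta)
  finally have e: "\<alpha> = (\<Sum>\<gamma>\<in>\<Delta>. of_int ((\<lambda>\<gamma>. if \<gamma> = \<alpha> then 1 else 0::int) \<gamma>) *\<^sub>R \<gamma>)" by simp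
  have "\<forall>\<gamma>\<in>\<Delta>. (\<lambda>\<gamma>. if \<gamma> = \<alpha> then 1 else 0::int) \<gamma> \<ge> 0" by simp
  have "\<exists>k::'a \<Rightarrow> int. (\<forall>\<gamma>\<in>\<Delta>. k \<gamma> \<ge> 0) \<and> \<alpha> = (\<Sum>\<gamma>\<in>\<Delta>. of_int (k \<gamma>) *\<^sub>R \<gamma>)"
    apply (rule exI[of _ "\<lambda>\<gamma>. if \<gamma> = \<alpha> then 1 else 0"])
    apply (rule conjI)
     apply simp
    apply (rule e)
    done
  then show ?thesis unfolding positive_roots_def using assms(2) by simp
qed

lemma copair_nonneg_iff: "a \<noteq> 0 \<Longrightarrow> copair x a \<ge> 0 \<longleftrightarrow> x \<bullet> a \<ge> 0"
proof -
  assume "a \<noteq> 0"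
  then have p: "a \<bullet> a > 0" by simp
  show ?thesis
    unfolding copair_def using p zero_le_divide_iff[of "2 * (x \<bullet> a)" "a \<bullet> a"] by linarith
qed

theorem mainTheorem2:
  fixes R \<Delta> :: "'a::euclidean_space set" and l1 l2 l3 l4 lam :: 'a
  assumes "root_system R" and "irreducible_rs R" and "is_base R \<Delta>"
    and "dominant_integral R \<Delta> l1" and "dominant_integral R \<Delta> l2"
    and "dominant_integral R \<Delta> l3" and "dominant_integral R \<Delta> l4"
    and "l1 + l2 = lam" and "l3 + l4 = lam"
    and "\<forall>\<alpha>\<in>positive_roots R \<Delta>. \<bar>copair (l1 - l2) \<alpha>\<bar> \<le> \<bar>copair (l3 - l4) \<alpha>\<bar>"
    and "Ppoly R l1 l2 \<subseteq> fundamental_chamber \<Delta>"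
    and "Ppoly R l3 l4 \<subseteq> fundamental_chamber \<Delta>"
  shows "Ppoly R l3 l4 \<subseteq> Ppoly R l1 l2"
proof -
  interpret rsys R \<Delta> using assms(1,3) by unfold_locales
  define d where "d = l3 - l1"
  have l2eq: "l2 = l4 + d" using assms(8,9) unfolding d_def by (simp add: algebra_simps)
  have domd: "domin d" unfolding domin_def
  proof
    fix \<alpha> assume aD: "\<alpha> \<in> \<Delta>"
    have a0: "\<alpha> \<noteq> 0" using D_ne aD by blast
    have aR: "\<alpha> \<in> R" using aD DR by blast
    have "refl \<alpha> \<circ> id \<in> weyl_group R" by (rule weyl_group.step[OF aR weyl_group.id])
    then have "l3 + refl \<alpha> l4 \<in> {l3 + w l4 | w. w \<in> weyl_group R}" by force
    then have "l3 + refl \<alpha> l4 \<in> Ppoly R l3 l4" unfolding Ppoly_def by (rule hull_inc)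
    then have "l3 + refl \<alpha> l4 \<in> fundamental_chamber \<Delta>" using assms(12) by (rule subsetD[rotated])
    then have "copair (l3 + refl \<alpha> l4) \<alpha> \<ge> 0" using aD
      unfolding fundamental_chamber_def by simp
    then have c34: "copair l3 \<alpha> - copair l4 \<alpha> \<ge> 0" by (simp add: copair_add copair_refl[OF a0])
    have "\<alpha> \<in> positive_roots R \<Delta>" using simple_pos aD aR finD by blast
    then have "\<bar>copair (l1 - l2) \<alpha>\<bar> \<le> \<bar>copair (l3 - l4) \<alpha>\<bar>"
      using assms(10) by (rule bspec[rotated])
    then have ab: "\<bar>copair l1 \<alpha> - copair l2 \<alpha>\<bar> \<le> \<bar>copair l3 \<alpha> - copair l4 \<alpha>\<bar>"
      by (simp only: copair_diff)
    have "copair (l1 + l2) \<alpha> = copair (l3 + l4) \<alpha>"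
      using assms(8,9) by simp
    then have "copair l1 \<alpha> + copair l2 \<alpha> = copair l3 \<alpha> + copair l4 \<alpha>"
      by (simp only: copair_add)
    then have "copair d \<alpha> \<ge> 0" using ab c34 unfolding d_def copair_diff by linarith
    then show "d \<bullet> \<alpha> \<ge> 0" using copair_nonneg_iff[OF a0] by blast
  qed
  have doml4: "domin l4" unfolding domin_def
  proof
    fix \<alpha> assume aD: "\<alpha> \<in> \<Delta>"
    have a0: "\<alpha> \<noteq> 0" using D_ne aD by blast
    have "l4 \<in> fundamental_chamber \<Delta>" using assms(7) by (simp add: dominant_integral_def)
    then have "copair l4 \<alpha> \<ge> 0" using aD
      unfolding fundamental_chamber_def by simp
    then show "l4 \<bullet> \<alpha> \<ge> 0" using copair_nonneg_iff[OF a0] by blast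
  qed
  define S where "S = {l1 + w l2 | w. w \<in> weyl_group R}"
  have Sfin: "finite S"
  proof -
    have "S = (\<lambda>w. l1 + w l2) ` weyl_group R" unfolding S_def by blast
    then show ?thesis using W_fin by simp
  qed
  have closedH: "closed (convex hull S)"
    using finite_imp_compact_convex_hull[OF Sfin] compact_imp_closed by blast
  have "{l3 + w l4 | w. w \<in> weyl_group R} \<subseteq> convex hull S"
  proof
    fix q assume "q \<in> {l3 + w l4 | w. w \<in> weyl_group R}"
    then obtain w where w: "w \<in> weyl_group R" "q = l3 + w l4" by blast
    obtain ws where ws: "set ws \<subseteq> \<Delta>" "w = wword ws" using weyl_gen[OF w(1)] by blast
    show "q \<in> convex hull S"
    proof (rule ccontr)
      assume "q \<notin> convex hull S"
      from separating_hyperplane_closed_point[OF convex_convex_hull closedH this]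
      obtain a b where ab: "a \<bullet> q < b" "\<forall>x\<in>convex hull S. b < a \<bullet> x" by blast
      define f where "f = - a"
      obtain xs where xs: "set xs \<subseteq> \<Delta>" "domin (wword xs f)" using F1 by blast
      define g where "g = wword xs f"
      have z: "0 \<notin> set xs" using setD0[OF xs(1)] .
      have sr: "set (rev xs) \<subseteq> \<Delta>" using xs(1) by simp
      have fg: "f = wword (rev xs) g" unfolding g_def using wf_rev_inv[OF z] by simp
      have fz: "\<And>z. f \<bullet> z = g \<bullet> wword xs z" unfolding fg using wf_inner_swap[OF z] by simp
      define x0 where "x0 = l1 + wword (rev xs) l2"
      have "x0 \<in> S" unfolding S_def x0_def using wf_weyl[OF sr] by blast
      then have "x0 \<in> convex hull S" by (rule hull_inc)
      then have "b < a \<bullet> x0" using ab by blast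
      then have lt: "f \<bullet> x0 < f \<bullet> q" using ab unfolding f_def by simp
      have lin: "linear (wword xs)" by (rule wf_linear)
      have "f \<bullet> x0 = g \<bullet> wword xs l1 + g \<bullet> l2"
        unfolding x0_def by (simp add: fz linear_add[OF lin] inner_add_right wf_inv_rev[OF z])
      moreover have "f \<bullet> q = g \<bullet> wword xs l1 + g \<bullet> wword xs d + g \<bullet> wword (xs @ ws) l4"
        unfolding w(2) ws(2) d_def
        by (simp add: fz linear_add[OF lin] linear_diff[OF lin] inner_add_right inner_diff_right wf_append)
      moreover have "g \<bullet> wword xs d \<le> g \<bullet> d" using F2[OF xs(1) xs(2)[folded g_def] domd] .
      moreover have "g \<bullet> wword (xs @ ws) l4 \<le> g \<bullet> l4"
        using F2[OF _ xs(2)[folded g_def] doml4] xs(1) ws(1) by simp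
      ultimately show False using lt l2eq by (simp add: inner_add_right)
    qed
  qed
  then show ?thesis unfolding Ppoly_def S_def[symmetric]
    by (rule hull_minimal) (rule convex_convex_hull)
qed

end
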